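(* Let $A_0\subseteq V'$ be feasible for (GDSP) with $\mathrm{assoc}_S(A_0)>0$. Let $$\theta=\min\{\mathrm{pen}(A):\emptyset\neq A\subseteq V',\ A \text{ infeasible for (GDSP)}\}$$ (if no infeasible nonempty set exists, the condition on $\gamma$ below is void). Let $$\gamma>\frac{\mathrm{vol}_d(V)}{\theta}\cdot\frac{\mathrm{vol}_g(A_0)+\nu_S}{\mathrm{assoc}_S(A_0)}.$$ Consider the unconstrained problem $$\min_{\emptyset\neq A\subseteq V'} U(A),\qquad U(A):=\frac{\mathrm{vol}_g(A)+\nu_S\,\mathrm{unit}(A)+\gamma\,\mathrm{pen}(A)}{\mathrm{assoc}_S(A)},$$ with the convention $x/0=+\infty$ for $x>0$. Then: - Every minimizer of $U$ is feasible for (GDSP) and is an optimal solution of (GDSP). - Every optimal solution of (GDSP) is a minimizer of $U$. - The minimum value of $U$ equals the reciprocal of the optimal value of (GDSP).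
   Context: Let $V$ be a finite vertex set with symmetric nonnegative weights $w_{ij}=w_{ji}\ge0$ and $w_{ii}=0$. - $d_i=\sum_{j\in V}w_{ij}$, and $\mathrm{vol}_h(A)=\sum_{i\in A}h_i$ for $h:V\to\mathbb{R}$. - $\mathrm{assoc}(A)=\sum_{i,j\in A}w_{ij}$ (ordered pairs), and $\mathrm{cut}(A,B)=\sum_{i\in A,j\in B}w_{ij}$. - Fix $S\subseteq V$, $V'=V\setminus S$, and $d^S_i=\sum_{j\in S}w_{ij}$. - $g:V\to(0,\infty)$, $\mu_S=\mathrm{assoc}(S)$, $\nu_S=\mathrm{vol}_g(S)$. - $\mathrm{unit}(A)=1$ if $A\ne\emptyset$ and $0$ otherwise. - For $A\subseteq V'$: $\mathrm{assoc}_S(A)=\mathrm{vol}_d(A)-\mathrm{cut}(A,V'\setminus A)+\mathrm{vol}_{d^S}(A)+\mu_S\,\mathrm{unit}(A)$. Constraint data: - Vectors $M_1,\dots,M_p\in[0,\infty)^V$ and reals $k_j,l_j$ for $j=1,\dots,p$. - A symmetric function $\mathrm{dist}:V\times V\to[0,\infty)$ with $\mathrm{dist}(u,u)=0$, and a threshold $d_0\ge0$. - A set $A\subseteq V'$ is feasible for (GDSP) if $A\neq\emptyset$, $k_j\le \mathrm{vol}_{M_j}(A)\le l_j$ for all $j$, and $\mathrm{dist}(u,v)\le d_0$ for all $u,v\in A$. - (GDSP) is the problem of maximizing $\dfrac{\mathrm{assoc}_S(A)}{\mathrm{vol}_g(A)+\nu_S}$ over feasible $A$. Penalty: $\mathrm{pen}(\emptyset)=0$,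 and for $A\ne\emptyset$, $$\mathrm{pen}(A)=\sum_{j=1}^p\max\{0,\mathrm{vol}_{M_j}(A)-l_j\}+\sum_{j=1}^p\max\{0,k_j-\mathrm{vol}_{M_j}(A)\}+\sum_{u,v\in A}\max\{0,\mathrm{dist}(u,v)-d_0\}.$$ *)

theory Defs
  imports Complex_Main "HOL-Library.Extended_Real"
begin

definition vol :: "('v \<Rightarrow> real) \<Rightarrow> 'v set \<Rightarrow> real" where
  "vol h A = (\<Sum>i\<in>A. h i)"

definition deg :: "('v \<Rightarrow> 'v \<Rightarrow> real) \<Rightarrow> 'v set \<Rightarrow> 'v \<Rightarrow> real" where
  "deg w T i = (\<Sum>j\<in>T. w i j)"

definition assoc :: "('v \<Rightarrow> 'v \<Rightarrow> real) \<Rightarrow> 'v set \<Rightarrow> real" where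
  "assoc w A = (\<Sum>i\<in>A. \<Sum>j\<in>A. w i j)"

definition cut :: "('v \<Rightarrow> 'v \<Rightarrow> real) \<Rightarrow> 'v set \<Rightarrow> 'v set \<Rightarrow> real" where
  "cut w A B = (\<Sum>i\<in>A. \<Sum>j\<in>B. w i j)"

definition unit_set :: "'v set \<Rightarrow> real" where
  "unit_set A = (if A \<noteq> {} then 1 else 0)"

text \<open>assoc_S(A) for A a subset of V' = V - S; here d = deg w V and d^S = deg w S.\<close>
definition assocS :: "('v \<Rightarrow> 'v \<Rightarrow> real) \<Rightarrow> 'v set \<Rightarrow> 'v set \<Rightarrow> 'v set \<Rightarrow> real" where
  "assocS w V S A = vol (deg w V) A - cut w A ((V - S) - A) + vol (deg w S) A
      + assoc w S * unit_set A"

definition feasible ::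
  "'v set \<Rightarrow> 'v set \<Rightarrow> nat \<Rightarrow> (nat \<Rightarrow> 'v \<Rightarrow> real) \<Rightarrow> (nat \<Rightarrow> real) \<Rightarrow> (nat \<Rightarrow> real)
    \<Rightarrow> ('v \<Rightarrow> 'v \<Rightarrow> real) \<Rightarrow> real \<Rightarrow> 'v set \<Rightarrow> bool" where
  "feasible V S p M k l dst d0 A \<longleftrightarrow>
     A \<subseteq> V - S \<and> A \<noteq> {} \<and>
     (\<forall>j\<in>{1..p}. k j \<le> vol (M j) A \<and> vol (M j) A \<le> l j) \<and>
     (\<forall>u\<in>A. \<forall>v\<in>A. dst u v \<le> d0)"

definition pen ::
  "nat \<Rightarrow> (nat \<Rightarrow> 'v \<Rightarrow> real) \<Rightarrow> (nat \<Rightarrow> real) \<Rightarrow> (nat \<Rightarrow> real)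
    \<Rightarrow> ('v \<Rightarrow> 'v \<Rightarrow> real) \<Rightarrow> real \<Rightarrow> 'v set \<Rightarrow> real" where
  "pen p M k l dst d0 A =
     (if A = {} then 0 else
        (\<Sum>j\<in>{1..p}. max 0 (vol (M j) A - l j))
      + (\<Sum>j\<in>{1..p}. max 0 (k j - vol (M j) A))
      + (\<Sum>u\<in>A. \<Sum>v\<in>A. max 0 (dst u v - d0)))"

definition gdsp_obj ::
  "('v \<Rightarrow> 'v \<Rightarrow> real) \<Rightarrow> 'v set \<Rightarrow> 'v set \<Rightarrow> ('v \<Rightarrow> real) \<Rightarrow> 'v set \<Rightarrow> real" where
  "gdsp_obj w V S g A = assocS w V S A / (vol g A + vol g S)"

definition Ufun ::
  "('v \<Rightarrow> 'v \<Rightarrow> real) \<Rightarrow> 'v set \<Rightarrow> 'v set \<Rightarrow> ('v \<Rightarrow> real) \<Rightarrow> real \<Rightarrow>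
    nat \<Rightarrow> (nat \<Rightarrow> 'v \<Rightarrow> real) \<Rightarrow> (nat \<Rightarrow> real) \<Rightarrow> (nat \<Rightarrow> real)
    \<Rightarrow> ('v \<Rightarrow> 'v \<Rightarrow> real) \<Rightarrow> real \<Rightarrow> 'v set \<Rightarrow> ereal" where
  "Ufun w V S g \<gamma> p M k l dst d0 A =
     (let num = vol g A + vol g S * unit_set A + \<gamma> * pen p M k l dst d0 A;
          den = assocS w V S A
      in if den = 0 \<and> num > 0 then PInfty else ereal (num / den))"

end

theory Submission imports Defs begin

lemma assocS_eq:
  assumes finV: "finite V" and SV: "S \<subseteq> V" and AV: "A \<subseteq> V - S" and ne: "A \<noteq> {}"
  shows "assocS w V S A = (\<Sum>i\<in>A. deg w A i) + 2*(\<Sum>i\<in>A. deg w S i) + assoc w S"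
proof -
  have fA: "finite A" using finV AV finite_subset by blast
  have fS: "finite S" using finV SV finite_subset by blast
  have fR: "finite (V-S-A)" using finV by blast
  have Veq: "V = (A \<union> (V-S-A)) \<union> S" using AV SV by blast
  have d: "deg w V i = deg w A i + deg w (V-S-A) i + deg w S i" for i
  proof -
    have "deg w V i = (\<Sum>j\<in>(A \<union> (V-S-A)) \<union> S. w i j)" unfolding deg_def using Veq by simp
    also have "\<dots> = (\<Sum>j\<in>A \<union> (V-S-A). w i j) + (\<Sum>j\<in>S. w i j)"
      by (rule sum.union_disjoint) (use fA fS fR AV in auto)
    also have "(\<Sum>j\<in>A \<union> (V-S-A). w i j) = (\<Sum>j\<in>A. w i j) + (\<Sum>j\<in>V-S-A. w i j)"
      by (rule sum.union_disjoint) (use fA fR in auto)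
    finally show ?thesis unfolding deg_def by simp
  qed
  have c: "cut w A (V-S-A) = (\<Sum>i\<in>A. deg w (V-S-A) i)" by (simp add: cut_def deg_def)
  show ?thesis unfolding assocS_def vol_def c d using ne
    by (simp add: sum.distrib unit_set_def)
qed

lemma assocS_bounds:
  assumes finV: "finite V" and SV: "S \<subseteq> V" and AV: "A \<subseteq> V - S" and ne: "A \<noteq> {}"
    and w_sym: "\<forall>i\<in>V. \<forall>j\<in>V. w i j = w j i"
    and w_nonneg: "\<forall>i\<in>V. \<forall>j\<in>V. 0 \<le> w i j"
  shows "0 \<le> assocS w V S A" "assocS w V S A \<le> vol (deg w V) V"
proof -
  have fA: "finite A" using finV AV finite_subset by blast
  have fS: "finite S" using finV SV finite_subset by blast
  have e: "assocS w V S A = (\<Sum>i\<in>A. deg w A i) + 2*(\<Sum>i\<in>A. deg w S i) + assoc w S"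
    by (rule assocS_eq[OF assms(1-4)])
  have nn: "\<And>X Y. X \<subseteq> V \<Longrightarrow> Y \<subseteq> V \<Longrightarrow> 0 \<le> (\<Sum>i\<in>X. \<Sum>j\<in>Y. w i j)"
    using w_nonneg by (intro sum_nonneg) blast
  have a1: "0 \<le> (\<Sum>i\<in>A. deg w A i)" unfolding deg_def using nn AV by blast
  have a2: "0 \<le> (\<Sum>i\<in>A. deg w S i)" unfolding deg_def using nn AV SV by blast
  have a3: "0 \<le> assoc w S" unfolding assoc_def using nn SV by blast
  show "0 \<le> assocS w V S A" using e a1 a2 a3 by simp
  have sw: "(\<Sum>i\<in>S. deg w A i) = (\<Sum>i\<in>A. deg w S i)"
  proof -
    have "(\<Sum>i\<in>S. deg w A i) = (\<Sum>i\<in>S. \<Sum>j\<in>A. w i j)" by (simp add: deg_def)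
    also have "\<dots> = (\<Sum>j\<in>A. \<Sum>i\<in>S. w i j)" by (rule sum.swap)
    also have "\<dots> = (\<Sum>j\<in>A. \<Sum>i\<in>S. w j i)"
      using w_sym AV SV by (intro sum.cong refl) blast
    finally show ?thesis by (simp add: deg_def)
  qed
  have dAS: "deg w (A \<union> S) i = deg w A i + deg w S i" for i
    unfolding deg_def by (rule sum.union_disjoint) (use fA fS AV in auto)
  have "(\<Sum>i\<in>A \<union> S. deg w (A \<union> S) i) = (\<Sum>i\<in>A. deg w (A \<union> S) i) + (\<Sum>i\<in>S. deg w (A \<union> S) i)"
    by (rule sum.union_disjoint) (use fA fS AV in auto)
  also have "\<dots> = (\<Sum>i\<in>A. deg w A i) + 2*(\<Sum>i\<in>A. deg w S i) + assoc w S"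
    unfolding dAS sum.distrib sw by (simp add: assoc_def deg_def)
  finally have q: "assocS w V S A = (\<Sum>i\<in>A \<union> S. deg w (A \<union> S) i)" using e by simp
  have "(\<Sum>i\<in>A \<union> S. deg w (A \<union> S) i) \<le> (\<Sum>i\<in>A \<union> S. deg w V i)"
    unfolding deg_def using AV SV w_nonneg
    by (intro sum_mono sum_mono2) (auto simp: finV)
  also have "\<dots> \<le> (\<Sum>i\<in>V. deg w V i)"
    using AV SV w_nonneg finV unfolding deg_def
    by (intro sum_mono2 sum_nonneg) auto
  finally show "assocS w V S A \<le> vol (deg w V) V" using q by (simp add: vol_def)
qed

lemma pen_feas:
  assumes "feasible V S p M k l dst d0 A"
  shows "pen p M k l dst d0 A = 0"
  using assms unfolding feasible_def pen_def by auto

lemma pen_nonneg: "0 \<le> pen p M k l dst d0 A"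
  unfolding pen_def by (auto intro!: sum_nonneg add_nonneg_nonneg)

lemma pen_infeas:
  assumes finV: "finite V" and AV: "A \<subseteq> V - S" and ne: "A \<noteq> {}"
    and nf: "\<not> feasible V S p M k l dst d0 A"
  shows "0 < pen p M k l dst d0 A"
proof -
  have fA: "finite A" using finV AV finite_subset by blast
  let ?s1 = "(\<Sum>j\<in>{1..p}. max 0 (vol (M j) A - l j))"
  let ?s2 = "(\<Sum>j\<in>{1..p}. max 0 (k j - vol (M j) A))"
  let ?s3 = "(\<Sum>u\<in>A. \<Sum>v\<in>A. max 0 (dst u v - d0))"
  have n1: "0 \<le> ?s1" and n2: "0 \<le> ?s2" and n3: "0 \<le> ?s3" by (auto intro!: sum_nonneg)
  have pe: "pen p M k l dst d0 A = ?s1 + ?s2 + ?s3" using ne by (simp add: pen_def)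
  from nf AV ne consider (a) j where "j \<in> {1..p}" "k j > vol (M j) A"
    | (b) j where "j \<in> {1..p}" "vol (M j) A > l j"
    | (c) u v where "u \<in> A" "v \<in> A" "dst u v > d0"
    unfolding feasible_def by (auto simp: not_le simp del: atLeastAtMost_iff)
  then show ?thesis
  proof cases
    case (a j)
    have "max 0 (k j - vol (M j) A) \<le> ?s2"
      by (rule member_le_sum) (use a in auto)
    then show ?thesis using a pe n1 n3 by linarith
  next
    case (b j)
    have "max 0 (vol (M j) A - l j) \<le> ?s1"
      by (rule member_le_sum) (use b in auto)
    then show ?thesis using b pe n2 n3 by linarith
  next
    case (c u v)
    have "max 0 (dst u v - d0) \<le> (\<Sum>v\<in>A. max 0 (dst u v - d0))"
      by (rule member_le_sum) (use c fA in auto)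
    also have "\<dots> \<le> ?s3"
      by (rule member_le_sum[where f="\<lambda>u. \<Sum>v\<in>A. max 0 (dst u v - d0)"]) (use c fA in \<open>auto intro!: sum_nonneg\<close>)
    finally show ?thesis using c pe n1 n2 by linarith
  qed
qed

theorem theorem1:
  fixes V S :: "'v set" and w :: "'v \<Rightarrow> 'v \<Rightarrow> real" and g :: "'v \<Rightarrow> real"
    and p :: nat and M :: "nat \<Rightarrow> 'v \<Rightarrow> real" and k l :: "nat \<Rightarrow> real"
    and dst :: "'v \<Rightarrow> 'v \<Rightarrow> real" and d0 \<gamma> :: real and A0 :: "'v set"
  assumes finV: "finite V" and SV: "S \<subseteq> V"
    and w_sym: "\<forall>i\<in>V. \<forall>j\<in>V. w i j = w j i"
    and w_nonneg: "\<forall>i\<in>V. \<forall>j\<in>V. 0 \<le> w i j"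
    and w_diag: "\<forall>i\<in>V. w i i = 0"
    and g_pos: "\<forall>i\<in>V. 0 < g i"
    and M_nonneg: "\<forall>j\<in>{1..p}. \<forall>i\<in>V. 0 \<le> M j i"
    and dist_sym: "\<forall>u\<in>V. \<forall>v\<in>V. dst u v = dst v u"
    and dist_nonneg: "\<forall>u\<in>V. \<forall>v\<in>V. 0 \<le> dst u v"
    and dist_refl: "\<forall>u\<in>V. dst u u = 0"
    and d0_nonneg: "0 \<le> d0"
    and A0_feas: "feasible V S p M k l dst d0 A0"
    and A0_pos: "assocS w V S A0 > 0"
    and gamma: "{A. A \<subseteq> V - S \<and> A \<noteq> {} \<and> \<not> feasible V S p M k l dst d0 A} \<noteq> {} \<Longrightarrow>
       \<gamma> > vol (deg w V) V
             / Min (pen p M k l dst d0 ` {A. A \<subseteq> V - S \<and> A \<noteq> {} \<and> \<not> feasible V S p M k l dst d0 A})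
             * ((vol g A0 + vol g S) / assocS w V S A0)"
  shows "(\<forall>A. (A \<subseteq> V - S \<and> A \<noteq> {} \<and>
               (\<forall>B. B \<subseteq> V - S \<and> B \<noteq> {} \<longrightarrow>
                  Ufun w V S g \<gamma> p M k l dst d0 A \<le> Ufun w V S g \<gamma> p M k l dst d0 B))
            \<longrightarrow> feasible V S p M k l dst d0 A \<and>
                (\<forall>B. feasible V S p M k l dst d0 B \<longrightarrow> gdsp_obj w V S g B \<le> gdsp_obj w V S g A))
       \<and> (\<forall>A. (feasible V S p M k l dst d0 A \<and>
               (\<forall>B. feasible V S p M k l dst d0 B \<longrightarrow> gdsp_obj w V S g B \<le> gdsp_obj w V S g A))
            \<longrightarrow> (\<forall>B. B \<subseteq> V - S \<and> B \<noteq> {} \<longrightarrow>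
                  Ufun w V S g \<gamma> p M k l dst d0 A \<le> Ufun w V S g \<gamma> p M k l dst d0 B))
       \<and> Min (Ufun w V S g \<gamma> p M k l dst d0 ` {A. A \<subseteq> V - S \<and> A \<noteq> {}})
           = ereal (1 / Max (gdsp_obj w V S g ` {A. feasible V S p M k l dst d0 A}))"
proof -
  let ?F = "feasible V S p M k l dst d0"
  let ?a = "assocS w V S"
  let ?U = "Ufun w V S g \<gamma> p M k l dst d0"
  let ?obj = "gdsp_obj w V S g"
  let ?P = "pen p M k l dst d0"
  let ?I = "{A. A \<subseteq> V - S \<and> A \<noteq> {} \<and> \<not> ?F A}"
  let ?D = "vol (deg w V) V"
  define N0 where "N0 = vol g A0 + vol g S"
  define a0 where "a0 = ?a A0"
  have Npos: "0 < vol g A + vol g S" if "A \<subseteq> V - S" "A \<noteq> {}" for A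
  proof -
    have fA: "finite A" using finV that finite_subset by blast
    have "0 < vol g A" unfolding vol_def using that g_pos fA by (intro sum_pos) auto
    moreover have "0 \<le> vol g S" unfolding vol_def using SV g_pos by (intro sum_nonneg) (auto simp: less_imp_le)
    ultimately show ?thesis by linarith
  qed
  have A0V: "A0 \<subseteq> V - S" "A0 \<noteq> {}" using A0_feas unfolding feasible_def by auto
  have N0pos: "0 < N0" unfolding N0_def using Npos[OF A0V] .
  have a0pos: "0 < a0" unfolding a0_def using A0_pos .
  have a0D: "a0 \<le> ?D" unfolding a0_def by (rule assocS_bounds(2)[OF finV SV A0V w_sym w_nonneg])
  have Dpos: "0 < ?D" using a0pos a0D by linarith
  have finI: "finite ?I" by (rule finite_subset[of _ "Pow V"]) (use finV in auto)
  have infeas: "0 < \<gamma> \<and> (\<forall>B\<in>?I. \<gamma> * ?P B / ?D > N0 / a0)" if ne: "?I \<noteq> {}"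
  proof -
    define \<theta> where "\<theta> = Min (?P ` ?I)"
    have "\<theta> \<in> ?P ` ?I" unfolding \<theta>_def using finI ne by (intro Min_in) auto
    then have thpos: "0 < \<theta>" using pen_infeas[OF finV] by blast
    have thle: "\<theta> \<le> ?P B" if "B \<in> ?I" for B unfolding \<theta>_def using finI that by (intro Min_le) auto
    have g: "\<gamma> > ?D / \<theta> * (N0 / a0)" using gamma[OF ne] unfolding \<theta>_def N0_def a0_def .
    have rpos: "0 < N0 / a0" using N0pos a0pos by simp
    have gpos: "0 < \<gamma>" using g Dpos thpos rpos
      by (smt (verit) divide_pos_pos mult_pos_pos)
    have "\<gamma> * \<theta> > (?D / \<theta> * (N0 / a0)) * \<theta>"
      using g thpos by (rule mult_strict_right_mono)
    also have "(?D / \<theta> * (N0 / a0)) * \<theta> = ?D * (N0 / a0)" using thpos by simp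
    finally have "\<gamma> * \<theta> > ?D * (N0 / a0)" .
    then have key: "\<gamma> * \<theta> / ?D > N0 / a0" using Dpos by (simp add: field_simps)
    show ?thesis
    proof (intro conjI ballI gpos)
      fix B assume B: "B \<in> ?I"
      have "\<gamma> * \<theta> / ?D \<le> \<gamma> * ?P B / ?D"
        using thle[OF B] gpos Dpos by (intro divide_right_mono mult_left_mono) auto
      then show "\<gamma> * ?P B / ?D > N0 / a0" using key by linarith
    qed
  qed
  have gpen: "0 \<le> \<gamma> * ?P A" if "A \<subseteq> V - S" "A \<noteq> {}" for A
  proof (cases "?F A")
    case True then show ?thesis using pen_feas[OF True] by simp
  next
    case False
    then have Ine: "?I \<noteq> {}" using that by blast
    then show ?thesis using infeas[OF Ine] pen_nonneg[of p M k l dst d0 A] by (simp add: less_imp_le)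
  qed
  have Uval: "?U A = (if ?a A = 0 then PInfty else ereal ((vol g A + vol g S + \<gamma> * ?P A) / ?a A))"
    if "A \<subseteq> V - S" "A \<noteq> {}" for A
  proof -
    have "0 < vol g A + vol g S + \<gamma> * ?P A" using Npos[OF that] gpen[OF that] by linarith
    then show ?thesis unfolding Ufun_def Let_def using that by (simp add: unit_set_def)
  qed
  have objval: "?obj A = ?a A / (vol g A + vol g S)" for A by (simp add: gdsp_obj_def)
  have Ufeas: "?U A = (if ?a A = 0 then PInfty else ereal (1 / ?obj A))" if "?F A" for A
  proof -
    have AV: "A \<subseteq> V - S" "A \<noteq> {}" using that unfolding feasible_def by auto
    show ?thesis using Uval[OF AV] pen_feas[OF that] objval by simp
  qed
  have objfeas: "(?a A = 0 \<longrightarrow> ?obj A = 0) \<and> (?a A \<noteq> 0 \<longrightarrow> ?obj A > 0)" if "?F A" for A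
  proof -
    have AV: "A \<subseteq> V - S" "A \<noteq> {}" using that unfolding feasible_def by auto
    have "0 \<le> ?a A" by (rule assocS_bounds(1)[OF finV SV AV w_sym w_nonneg])
    then show ?thesis using objval[of A] Npos[OF AV] by auto
  qed
  have obj0: "?obj A0 = a0 / N0" unfolding a0_def N0_def by (simp add: gdsp_obj_def)
  have obj0pos: "?obj A0 > 0" using obj0 a0pos N0pos by simp
  have UA0: "?U A0 = ereal (N0 / a0)"
    using Ufeas[OF A0_feas] a0pos obj0 unfolding a0_def by simp
  have K3: "?U B > ereal (N0 / a0)" if B: "B \<in> ?I" for B
  proof -
    have ne: "?I \<noteq> {}" using B by blast
    have BV: "B \<subseteq> V - S" "B \<noteq> {}" using B by auto
    show ?thesis
    proof (cases "?a B = 0")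
      case True then show ?thesis using Uval[OF BV] by simp
    next
      case False
      have aB0: "0 < ?a B" using False assocS_bounds(1)[OF finV SV BV w_sym w_nonneg] by linarith
      have aBD: "?a B \<le> ?D" by (rule assocS_bounds(2)[OF finV SV BV w_sym w_nonneg])
      have gP: "0 \<le> \<gamma> * ?P B" using gpen[OF BV] .
      have DaB: "0 < ?D * ?a B" using Dpos aB0 by (rule mult_pos_pos)
      have s1: "\<gamma> * ?P B / ?D \<le> \<gamma> * ?P B / ?a B"
        using aBD gP DaB by (rule divide_left_mono)
      have np: "0 < vol g B + vol g S" by (rule Npos[OF BV])
      have s2: "\<gamma> * ?P B / ?a B \<le> (vol g B + vol g S + \<gamma> * ?P B) / ?a B"
        by (rule divide_right_mono) (use aB0 np in linarith)+
      have h: "\<gamma> * ?P B / ?D > N0 / a0" using infeas[OF ne] B by blast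
      have "N0 / a0 < (vol g B + vol g S + \<gamma> * ?P B) / ?a B"
        using s1 s2 h by linarith
      then show ?thesis using Uval[OF BV] False by simp
    qed
  qed
  have part2: "\<forall>B. B \<subseteq> V - S \<and> B \<noteq> {} \<longrightarrow> ?U A \<le> ?U B"
    if FA: "?F A" and opt: "\<forall>B. ?F B \<longrightarrow> ?obj B \<le> ?obj A" for A
  proof -
    have ge: "?obj A0 \<le> ?obj A" using opt A0_feas by blast
    have aA: "?a A \<noteq> 0" using objfeas[OF FA] ge obj0pos by auto
    have objA: "0 < ?obj A" using objfeas[OF FA] aA by auto
    have UA: "?U A = ereal (1 / ?obj A)" using Ufeas[OF FA] aA by simp
    have "1 / ?obj A \<le> 1 / ?obj A0" using ge obj0pos by (intro divide_left_mono) auto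
    also have "1 / ?obj A0 = N0 / a0" using obj0 by simp
    finally have UAle: "?U A \<le> ereal (N0 / a0)" using UA by simp
    show ?thesis
    proof (intro allI impI)
      fix B assume BV: "B \<subseteq> V - S \<and> B \<noteq> {}"
      show "?U A \<le> ?U B"
      proof (cases "?F B")
        case False
        then have "B \<in> ?I" using BV by blast
        then have "ereal (N0 / a0) < ?U B" by (rule K3)
        then show ?thesis using UAle by simp
      next
        case True
        show ?thesis
        proof (cases "?a B = 0")
          case True2: True
          then show ?thesis using Ufeas[OF True] by simp
        next
          case False
          have objB: "0 < ?obj B" using objfeas[OF True] False by auto
          have "?obj B \<le> ?obj A" using opt True by blast
          then have "1 / ?obj A \<le> 1 / ?obj B" using objB by (intro divide_left_mono) auto
          then show ?thesis using UA Ufeas[OF True] False by simp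
        qed
      qed
    qed
  qed
  have part1: "?F A \<and> (\<forall>B. ?F B \<longrightarrow> ?obj B \<le> ?obj A)"
    if AV: "A \<subseteq> V - S" "A \<noteq> {}" and mn: "\<forall>B. B \<subseteq> V - S \<and> B \<noteq> {} \<longrightarrow> ?U A \<le> ?U B" for A
  proof -
    have "?U A \<le> ?U A0" using mn A0V by blast
    then have le0: "?U A \<le> ereal (N0 / a0)" using UA0 by simp
    have FA: "?F A"
    proof (rule ccontr)
      assume "\<not> ?F A"
      then have "A \<in> ?I" using AV by blast
      then have "ereal (N0 / a0) < ?U A" by (rule K3)
      then show False using le0 by simp
    qed
    have aA: "?a A \<noteq> 0" using le0 Ufeas[OF FA] by auto
    have objA: "0 < ?obj A" using objfeas[OF FA] aA by auto
    have UA: "?U A = ereal (1 / ?obj A)" using Ufeas[OF FA] aA by simp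
    show ?thesis
    proof (intro conjI FA allI impI)
      fix B assume FB: "?F B"
      show "?obj B \<le> ?obj A"
      proof (cases "?a B = 0")
        case True then show ?thesis using objfeas[OF FB] objA by simp
      next
        case False
        have objB: "0 < ?obj B" using objfeas[OF FB] False by auto
        have BV: "B \<subseteq> V - S" "B \<noteq> {}" using FB unfolding feasible_def by auto
        have "?U A \<le> ?U B" using mn BV by blast
        then have "1 / ?obj A \<le> 1 / ?obj B" using UA Ufeas[OF FB] False by simp
        then show ?thesis using objA objB by (simp add: divide_le_cancel field_simps)
      qed
    qed
  qed
  have part3: "Min (?U ` {A. A \<subseteq> V - S \<and> A \<noteq> {}}) = ereal (1 / Max (?obj ` {A. ?F A}))"
  proof -
    have finF: "finite {A. ?F A}" by (rule finite_subset[of _ "Pow V"]) (use finV in \<open>auto simp: feasible_def\<close>)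
    have "Max (?obj ` {A. ?F A}) \<in> ?obj ` {A. ?F A}" using finF A0_feas by (intro Max_in) auto
    then obtain As where FAs: "?F As" and As: "?obj As = Max (?obj ` {A. ?F A})" by auto
    have opt: "\<forall>B. ?F B \<longrightarrow> ?obj B \<le> ?obj As" unfolding As using finF by (auto intro: Max_ge)
    have mn: "\<forall>B. B \<subseteq> V - S \<and> B \<noteq> {} \<longrightarrow> ?U As \<le> ?U B" using part2[OF FAs opt] .
    have ge: "?obj A0 \<le> ?obj As" using opt A0_feas by blast
    have aA: "?a As \<noteq> 0" using objfeas[OF FAs] ge obj0pos by auto
    have UA: "?U As = ereal (1 / ?obj As)" using Ufeas[OF FAs] aA by simp
    have AsV: "As \<subseteq> V - S" "As \<noteq> {}" using FAs unfolding feasible_def by auto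
    have "Min (?U ` {A. A \<subseteq> V - S \<and> A \<noteq> {}}) = ?U As"
    proof (rule Min_eqI)
      have "finite {A. A \<subseteq> V - S \<and> A \<noteq> {}}" by (rule finite_subset[of _ "Pow V"]) (use finV in auto)
      then show "finite (?U ` {A. A \<subseteq> V - S \<and> A \<noteq> {}})" by (rule finite_imageI)
      show "\<And>y. y \<in> ?U ` {A. A \<subseteq> V - S \<and> A \<noteq> {}} \<Longrightarrow> ?U As \<le> y" using mn by blast
      show "?U As \<in> ?U ` {A. A \<subseteq> V - S \<and> A \<noteq> {}}" using AsV by blast
    qed
    then show ?thesis using UA As by simp
  qed
  show ?thesis using part1 part2 part3 by blast
qed

end
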